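(* Let $L$ be the unnormalized Laplacian of a simple undirected network with $M$ edges, with simple eigenvalues $\lambda_1,\dots,\lambda_N$ and orthonormal eigenvectors $\bm v^{(1)},\dots,\bm v^{(N)}$. Suppose the network is modified by adding a set of edges $\mathcal{E}^+$ and removing a set of edges $\mathcal{E}^-$, encoded by $\Delta L=\sum_{(p,q)\in\mathcal{E}^+}\Delta L^{(pq)}-\sum_{(p,q)\in\mathcal{E}^-}\Delta L^{(pq)}$, where $\Delta L^{(pq)}$ has entries $\Delta L^{(pq)}_{pp}=\Delta L^{(pq)}_{qq}=1$, $\Delta L^{(pq)}_{pq}=\Delta L^{(pq)}_{qp}=-1$, and $0$ elsewhere. Let $L(\epsilon)=L+\epsilon\,\Delta L$, assume its eigenvalues $\lambda_i(\epsilon)$ are simple, and let $h(\epsilon)=-\sum_i\frac{\lambda_i(\epsilon)}{2M}\log_2\frac{\lambda_i(\epsilon)}{2M}$. Then $h(\epsilon)=h(0)+\epsilon h'(0)+\mathcal{O}(\epsilon^2)$ with $$h'(0)=-\frac{1}{2M}\sum_{i=1}^N\left(\sum_{(p,q)\in\mathcal{E}^+}(\bm v^{(i)}_p-\bm v^{(i)}_q)^2-\sum_{(p,q)\in\mathcal{E}^-}(\bm v^{(i)}_p-\bm v^{(i)}_q)^2\right)\left(\log_2\frac{\lambda_i}{2M}+\frac{1}{\ln 2}\right).$$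
   Context: For a simple undirected unweighted network with adjacency matrix $A$ and degree matrix $D$, the unnormalized Laplacian is $L=D-A$. The von Neumann entropy of a network with $M$ edges and Laplacian eigenvalues $\lambda_i$ is $-\sum_i\frac{\lambda_i}{2M}\log_2\frac{\lambda_i}{2M}$ with $0\log_2 0=0$. *)

theory Defs
  imports "HOL-Analysis.Analysis" "HOL-Library.Landau_Symbols"
begin

definition simple_graph :: "('n \<Rightarrow> 'n \<Rightarrow> bool) \<Rightarrow> bool" where
  "simple_graph E \<longleftrightarrow> (\<forall>i j. E i j \<longrightarrow> E j i) \<and> (\<forall>i. \<not> E i i)"

definition num_edges :: "('n \<Rightarrow> 'n \<Rightarrow> bool) \<Rightarrow> nat" where
  "num_edges E = card {{p, q} | p q. E p q}"

definition degree :: "('n::finite \<Rightarrow> 'n \<Rightarrow> bool) \<Rightarrow> 'n \<Rightarrow> nat" where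
  "degree E i = card {j. E i j}"

definition laplacian :: "('n::finite \<Rightarrow> 'n \<Rightarrow> bool) \<Rightarrow> real^'n^'n" where
  "laplacian E = (\<chi> i j. (if i = j then real (degree E i) else 0) - (if E i j then 1 else 0))"

definition deltaL :: "'n::finite \<Rightarrow> 'n \<Rightarrow> real^'n^'n" where
  "deltaL p q = (\<chi> i j. if (i = p \<and> j = p) \<or> (i = q \<and> j = q) then 1
                        else if (i = p \<and> j = q) \<or> (i = q \<and> j = p) then -1 else 0)"

definition eigvals :: "real^'n^'n \<Rightarrow> real set" where
  "eigvals A = {\<mu>. \<exists>x. x \<noteq> 0 \<and> A *v x = \<mu> *\<^sub>R x}"

definition vn_term :: "nat \<Rightarrow> real \<Rightarrow> real" where
  "vn_term M x = (if x = 0 then 0 else (x / (2 * real M)) * log 2 (x / (2 * real M)))"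

text \<open>Von Neumann entropy of a matrix with simple spectrum (each eigenvalue counted once),
normalized by 2M.\<close>
definition vn_entropy :: "nat \<Rightarrow> real^'n^'n \<Rightarrow> real" where
  "vn_entropy M A = - (\<Sum>\<mu>\<in>eigvals A. vn_term M \<mu>)"

end

theory Submission
  imports Defs
begin
lemma "card (Basis :: (real^'n::finite) set) = CARD('n)" by simp
lemma expand_on:
  fixes v :: "'n::finite \<Rightarrow> real^'n"
  assumes orth: "\<And>i j. v i \<bullet> v j = (if i = j then 1 else 0)"
  shows "(\<Sum>i\<in>UNIV. (x \<bullet> v i) *\<^sub>R v i) = x"
proof -
  have inj: "inj v" by (metis inj_on_def orth zero_neq_one)
  let ?B = "range v"
  have po: "pairwise orthogonal ?B" using orth unfolding pairwise_def orthogonal_def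
    by (metis (no_types, lifting) imageE)
  have n1: "\<And>b. b \<in> ?B \<Longrightarrow> norm b = 1" using orth by (auto simp: norm_eq_sqrt_inner)
  have 0: "0 \<notin> ?B" using n1 by fastforce
  have ind: "independent ?B" by (rule pairwise_orthogonal_independent[OF po 0])
  have cB: "card ?B = CARD('n)" using inj by (simp add: card_image)
  have "UNIV \<subseteq> span ?B"
    by (rule card_ge_dim_independent) (use ind cB in auto)
  then have "x \<in> span ?B" by auto
  then have "(\<Sum>b\<in>?B. (x \<bullet> b) *\<^sub>R b) = x"
    using orthonormal_basis_expand[OF po n1] by auto
  then show ?thesis using inj by (simp add: sum.reindex)
qed


definition symm :: "real^'n^'n \<Rightarrow> bool" where
  "symm M \<longleftrightarrow> (\<forall>i j. M $ i $ j = M $ j $ i)"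

lemma symm_inner:
  assumes "symm M" shows "(M *v x) \<bullet> y = x \<bullet> (M *v y)"
proof -
  have t: "transpose M = M" using assms by (simp add: symm_def transpose_def vec_eq_iff)
  have "x \<bullet> (M *v y) = (x v* M) \<bullet> y" by (simp add: dot_lmul_matrix)
  also have "x v* M = M *v x" by (metis t vector_transpose_matrix)
  finally show ?thesis by simp
qed

lemma symm_add: "symm M \<Longrightarrow> symm N \<Longrightarrow> symm (M + N)" by (simp add: symm_def)
lemma symm_diff: "symm M \<Longrightarrow> symm N \<Longrightarrow> symm (M - N)" by (simp add: symm_def)
lemma symm_scale: "symm M \<Longrightarrow> symm (c *\<^sub>R M)" by (simp add: symm_def)
lemma symm_sum: "(\<And>a. a \<in> S \<Longrightarrow> symm (f a)) \<Longrightarrow> symm (sum f S)"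
  by (induction S rule: infinite_finite_induct) (auto simp: symm_def)

lemma parseval:
  fixes v :: "'n::finite \<Rightarrow> real^'n"
  assumes orth: "\<And>i j. v i \<bullet> v j = (if i = j then 1 else 0)"
  shows "(norm x)^2 = (\<Sum>i\<in>UNIV. (x \<bullet> v i)^2)"
proof -
  have "(norm x)^2 = x \<bullet> x" by (simp add: power2_norm_eq_inner)
  also have "\<dots> = x \<bullet> (\<Sum>i\<in>UNIV. (x \<bullet> v i) *\<^sub>R v i)" using expand_on[OF orth] by simp
  also have "\<dots> = (\<Sum>i\<in>UNIV. (x \<bullet> v i)^2)" by (simp add: inner_sum_right power2_eq_square)
  finally show ?thesis .
qed

lemma eig_unit:
  assumes "\<mu> \<in> eigvals M" shows "\<exists>x. norm x = 1 \<and> M *v x = \<mu> *\<^sub>R x"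
proof -
  obtain x where x: "x \<noteq> 0" "M *v x = \<mu> *\<^sub>R x" using assms by (auto simp: eigvals_def)
  let ?y = "(1 / norm x) *\<^sub>R x"
  have "norm ?y = 1" using x by simp
  moreover have "M *v ?y = \<mu> *\<^sub>R ?y" using x by (simp add: matrix_vector_mult_scaleR)
  ultimately show ?thesis by blast
qed



locale pert =
  fixes L D :: "real^'n::finite^'n" and lam :: "'n \<Rightarrow> real" and v :: "'n \<Rightarrow> real^'n"
  assumes symL: "symm L" and symD: "symm D"
    and eig: "\<And>i. L *v v i = lam i *\<^sub>R v i"
    and orth: "\<And>i j. v i \<bullet> v j = (if i = j then 1 else 0)"
    and injl: "inj lam"
begin

lemma scaleR_mv: "(c *\<^sub>R M) *v x = c *\<^sub>R (M *v x)" for M :: "real^'n^'n"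
  by (simp add: vec_eq_iff matrix_vector_mult_def sum_distrib_left algebra_simps)

definition A :: "real \<Rightarrow> real^'n^'n" where "A e = L + e *\<^sub>R D"
definition K :: real where "K = onorm (\<lambda>x. D *v x) + 1"

lemma K_pos: "K > 0"
  unfolding K_def using onorm_pos_le[OF matrix_vector_mul_bounded_linear] by smt

lemma K_bound: "norm (D *v x) \<le> K * norm x"
proof -
  have "norm (D *v x) \<le> onorm (\<lambda>x. D *v x) * norm x"
    by (rule onorm[OF matrix_vector_mul_bounded_linear])
  also have "\<dots> \<le> K * norm x" unfolding K_def by (simp add: mult_right_mono)
  finally show ?thesis .
qed

lemma symA: "symm (A e)" unfolding A_def by (intro symm_add symm_scale symL symD)

lemma coef:
  assumes "A e *v x = \<mu> *\<^sub>R x"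
  shows "(x \<bullet> v i) * (\<mu> - lam i) = e * ((D *v x) \<bullet> v i)"
proof -
  have "(A e *v x) \<bullet> v i = \<mu> * (x \<bullet> v i)" using assms by simp
  moreover have "(A e *v x) \<bullet> v i = (L *v x) \<bullet> v i + e * ((D *v x) \<bullet> v i)"
    unfolding A_def by (simp add: matrix_vector_mult_add_rdistrib scaleR_mv inner_add_left)
  moreover have "(L *v x) \<bullet> v i = lam i * (x \<bullet> v i)"
    using symm_inner[OF symL] eig by simp
  ultimately show ?thesis by (simp add: algebra_simps)
qed

lemma key_sum:
  assumes "A e *v x = \<mu> *\<^sub>R x" "norm x = 1"
  shows "(\<Sum>j\<in>UNIV. (x \<bullet> v j)^2 * (\<mu> - lam j)^2) \<le> e^2 * K^2"
proof -
  have "(\<Sum>j\<in>UNIV. (x \<bullet> v j)^2 * (\<mu> - lam j)^2) = (\<Sum>j\<in>UNIV. e^2 * ((D *v x) \<bullet> v j)^2)"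
    by (intro sum.cong refl) (metis coef[OF assms(1)] power_mult_distrib)
  also have "\<dots> = e^2 * (norm (D *v x))^2"
    by (simp add: parseval[OF orth] sum_distrib_left)
  also have "\<dots> \<le> e^2 * K^2"
    using K_bound[of x] assms(2) by (intro mult_left_mono power_mono) auto
  finally show ?thesis .
qed

lemma sum_sq: "norm x = 1 \<Longrightarrow> (\<Sum>j\<in>UNIV. (x \<bullet> v j)^2) = 1"
  using parseval[OF orth, of x] by simp

lemma near:
  assumes "A e *v x = \<mu> *\<^sub>R x" "norm x = 1"
  shows "\<exists>i. \<bar>\<mu> - lam i\<bar> \<le> \<bar>e\<bar> * K"
proof -
  define m where "m = Min (range (\<lambda>j. (\<mu> - lam j)^2))"
  have "m \<in> range (\<lambda>j. (\<mu> - lam j)^2)" unfolding m_def by (rule Min_in) auto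
  then obtain i where i: "m = (\<mu> - lam i)^2" by auto
  have le: "m \<le> (\<mu> - lam j)^2" for j unfolding m_def by simp
  have "m = (\<Sum>j\<in>UNIV. (x \<bullet> v j)^2 * m)" using sum_sq[OF assms(2)] by (simp add: sum_distrib_right[symmetric])
  also have "\<dots> \<le> (\<Sum>j\<in>UNIV. (x \<bullet> v j)^2 * (\<mu> - lam j)^2)"
    by (intro sum_mono mult_left_mono le) auto
  also have "\<dots> \<le> e^2 * K^2" by (rule key_sum[OF assms])
  finally have "(\<mu> - lam i)^2 \<le> (\<bar>e\<bar> * K)^2" using i by (simp add: power_mult_distrib)
  then have "\<bar>\<mu> - lam i\<bar> \<le> \<bar>e\<bar> * K" using K_pos
    by (metis abs_le_square_iff abs_mult abs_of_pos abs_abs)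
  then show ?thesis by blast
qed

end

context pert begin

definition gap :: real where "gap = Min (insert 1 {\<bar>lam i - lam j\<bar> | i j. i \<noteq> j})"
definition rho :: real where "rho = Min (insert 1 {\<bar>lam i\<bar> | i. lam i \<noteq> 0})"
definition d :: "'n \<Rightarrow> real" where "d i = (D *v v i) \<bullet> v i"

lemma fin_gap: "finite {\<bar>lam i - lam j\<bar> | i j. i \<noteq> j}"
  by (rule finite_subset[of _ "(\<lambda>(i,j). \<bar>lam i - lam j\<bar>) ` UNIV"]) auto
lemma fin_rho: "finite {\<bar>lam i\<bar> | i. lam i \<noteq> 0}"
  by (rule finite_subset[of _ "(\<lambda>i. \<bar>lam i\<bar>) ` UNIV"]) auto

lemma gap_pos: "gap > 0"
  unfolding gap_def using fin_gap injl by (auto simp: inj_eq)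
lemma gap_le: "i \<noteq> j \<Longrightarrow> gap \<le> \<bar>lam i - lam j\<bar>"
  unfolding gap_def using fin_gap by (intro Min_le) auto
lemma rho_pos: "rho > 0"
  unfolding rho_def using fin_rho by auto
lemma rho_le: "lam i \<noteq> 0 \<Longrightarrow> rho \<le> \<bar>lam i\<bar>"
  unfolding rho_def using fin_rho by (intro Min_le) auto

lemma conc:
  assumes ev: "A e *v x = \<mu> *\<^sub>R x" and n: "norm x = 1"
    and ni: "\<bar>\<mu> - lam i\<bar> \<le> \<bar>e\<bar> * K" and sm: "\<bar>e\<bar> * K \<le> gap / 2"
  shows "(gap^2 / 4) * (1 - (x \<bullet> v i)^2) \<le> e^2 * K^2"
proof -
  have gj: "(gap/2)^2 \<le> (\<mu> - lam j)^2" if "j \<noteq> i" for j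
  proof -
    have "gap \<le> \<bar>lam i - lam j\<bar>" using gap_le that by (simp add: abs_minus_commute)
    then have "gap / 2 \<le> \<bar>\<mu> - lam j\<bar>" using ni sm by linarith
    then show ?thesis using gap_pos by (metis abs_le_square_iff abs_of_pos half_gt_zero abs_abs)
  qed
  have s1: "(\<Sum>j\<in>UNIV - {i}. (x \<bullet> v j)^2) = 1 - (x \<bullet> v i)^2"
    using sum_sq[OF n] sum.remove[of UNIV i "\<lambda>j. (x \<bullet> v j)^2"] by simp
  have "(gap^2 / 4) * (1 - (x \<bullet> v i)^2) = (gap/2)^2 * (\<Sum>j\<in>UNIV - {i}. (x \<bullet> v j)^2)"
    by (simp add: s1 power_divide)
  also have "\<dots> = (\<Sum>j\<in>UNIV - {i}. (x \<bullet> v j)^2 * (gap/2)^2)"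
    by (simp add: sum_distrib_left mult.commute)
  also have "\<dots> \<le> (\<Sum>j\<in>UNIV - {i}. (x \<bullet> v j)^2 * (\<mu> - lam j)^2)"
    by (intro sum_mono mult_left_mono gj) auto
  also have "\<dots> \<le> (\<Sum>j\<in>UNIV. (x \<bullet> v j)^2 * (\<mu> - lam j)^2)"
    by (intro sum_mono2) auto
  also have "\<dots> \<le> e^2 * K^2" by (rule key_sum[OF ev n])
  finally show ?thesis .
qed

lemma rnorm:
  assumes "norm x = 1"
  shows "(norm (x - (x \<bullet> v i) *\<^sub>R v i))^2 = 1 - (x \<bullet> v i)^2"
proof -
  have vv: "v i \<bullet> v i = 1" using orth by simp
  have xx: "x \<bullet> x = 1" using assms by (metis norm_eq_1)
  show ?thesis unfolding power2_norm_eq_inner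
    by (simp add: inner_diff_left inner_diff_right vv xx inner_commute power2_eq_square)
qed

lemma second:
  assumes ev: "A e *v x = \<mu> *\<^sub>R x" and n: "norm x = 1"
    and ni: "\<bar>\<mu> - lam i\<bar> \<le> \<bar>e\<bar> * K" and sm: "\<bar>e\<bar> * K \<le> gap / 4"
  shows "(\<mu> - lam i - e * d i)^2 \<le> 8 * e^4 * K^4 / gap^2"
    and "(x \<bullet> v i)^2 \<ge> 3/4"
    and "(norm (x - (x \<bullet> v i) *\<^sub>R v i))^2 \<le> 1/4"
proof -
  define c where "c = x \<bullet> v i"
  define r where "r = x - c *\<^sub>R v i"
  have g: "gap > 0" by (rule gap_pos)
  have cc: "(gap^2 / 4) * (1 - c^2) \<le> e^2 * K^2"
    unfolding c_def by (rule conc[OF ev n ni]) (use sm g in simp)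
  have ek: "e^2 * K^2 \<le> gap^2 / 16"
  proof -
    have "(\<bar>e\<bar> * K)^2 \<le> (gap/4)^2" using sm K_pos by (intro power_mono) auto
    then show ?thesis by (simp add: power_mult_distrib power_divide)
  qed
  have oc: "1 - c^2 \<le> 4 * e^2 * K^2 / gap^2" using cc g by (simp add: field_simps)
  have "4 * e^2 * K^2 / gap^2 \<le> 1/4" using ek g by (simp add: field_simps)
  then have oc2: "1 - c^2 \<le> 1/4" using oc by linarith
  then show "(x \<bullet> v i)^2 \<ge> 3/4" unfolding c_def by simp
  show "(norm (x - (x \<bullet> v i) *\<^sub>R v i))^2 \<le> 1/4" using rnorm[OF n, of i] oc2 unfolding c_def by simp
  have rn: "(norm r)^2 = 1 - c^2" unfolding r_def c_def by (rule rnorm[OF n])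
  have xr: "x = c *\<^sub>R v i + r" unfolding r_def by simp
  have Dx: "(D *v x) \<bullet> v i = c * d i + (D *v r) \<bullet> v i"
    unfolding d_def by (subst xr) (simp add: matrix_vector_right_distrib scaleR_mv inner_add_left
        matrix_vector_mult_scaleR)
  have key: "c * (\<mu> - lam i - e * d i) = e * ((D *v r) \<bullet> v i)"
    using coef[OF ev, of i] Dx unfolding c_def[symmetric] by (simp add: algebra_simps)
  have nv: "norm (v i) = 1" using orth by (simp add: norm_eq_sqrt_inner)
  have b1: "((D *v r) \<bullet> v i)^2 \<le> K^2 * (1 - c^2)"
  proof -
    have "\<bar>(D *v r) \<bullet> v i\<bar> \<le> norm (D *v r) * norm (v i)" by (rule Cauchy_Schwarz_ineq2)
    also have "\<dots> \<le> K * norm r" using K_bound nv by simp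
    finally have "\<bar>(D *v r) \<bullet> v i\<bar> \<le> K * norm r" .
    then have "((D *v r) \<bullet> v i)^2 \<le> (K * norm r)^2"
      by (metis abs_ge_zero abs_le_square_iff abs_of_nonneg order_trans power2_abs)
    then show ?thesis using rn by (simp add: power_mult_distrib)
  qed
  have "c^2 * (\<mu> - lam i - e * d i)^2 = e^2 * ((D *v r) \<bullet> v i)^2"
    by (metis key power_mult_distrib)
  also have "\<dots> \<le> e^2 * (K^2 * (1 - c^2))" by (intro mult_left_mono b1) auto
  also have "\<dots> \<le> e^2 * (K^2 * (4 * e^2 * K^2 / gap^2))"
    by (intro mult_left_mono oc) auto
  finally have "c^2 * (\<mu> - lam i - e * d i)^2 \<le> 4 * e^4 * K^4 / gap^2"
    by (simp add: field_simps power2_eq_square power4_eq_xxxx)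
  moreover have "(1/2) * (\<mu> - lam i - e * d i)^2 \<le> c^2 * (\<mu> - lam i - e * d i)^2"
    using oc2 by (intro mult_right_mono) auto
  ultimately show "(\<mu> - lam i - e * d i)^2 \<le> 8 * e^4 * K^4 / gap^2" by simp
qed

lemma uniq:
  assumes ev: "A e *v x = \<mu> *\<^sub>R x" and n: "norm x = 1"
    and ev': "A e *v x' = \<mu>' *\<^sub>R x'" and n': "norm x' = 1"
    and ni: "\<bar>\<mu> - lam i\<bar> \<le> \<bar>e\<bar> * K" and ni': "\<bar>\<mu>' - lam i\<bar> \<le> \<bar>e\<bar> * K"
    and sm: "\<bar>e\<bar> * K \<le> gap / 4"
  shows "\<mu> = \<mu>'"
proof (rule ccontr)
  assume ne: "\<mu> \<noteq> \<mu>'"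
  have "\<mu> * (x \<bullet> x') = (A e *v x) \<bullet> x'" using ev by simp
  also have "\<dots> = x \<bullet> (A e *v x')" by (rule symm_inner[OF symA])
  also have "\<dots> = \<mu>' * (x \<bullet> x')" using ev' by simp
  finally have xx: "x \<bullet> x' = 0" using ne by simp
  define c where "c = x \<bullet> v i"
  define r where "r = x - c *\<^sub>R v i"
  define c' where "c' = x' \<bullet> v i"
  define r' where "r' = x' - c' *\<^sub>R v i"
  have vv: "v i \<bullet> v i = 1" using orth by simp
  have rv: "r \<bullet> v i = 0" "v i \<bullet> r = 0" "r' \<bullet> v i = 0" "v i \<bullet> r' = 0" unfolding r_def r'_def c_def c'_def
    by (simp_all add: inner_diff_left inner_diff_right vv inner_commute)
  have "x \<bullet> x' = (c *\<^sub>R v i + r) \<bullet> (c' *\<^sub>R v i + r')" unfolding r_def r'_def by simp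
  also have "\<dots> = c * c' + r \<bullet> r'"
    by (simp add: inner_add_left inner_add_right vv rv inner_commute)
  finally have e1: "c * c' = - (r \<bullet> r')" using xx by simp
  have "(r \<bullet> r')^2 \<le> (norm r * norm r')^2"
    by (metis Cauchy_Schwarz_ineq2 abs_ge_zero abs_le_square_iff abs_of_nonneg order_trans power2_abs)
  also have "\<dots> = (norm r)^2 * (norm r')^2" by (simp add: power_mult_distrib)
  also have "\<dots> \<le> (1/4) * (1/4)"
    using second(3)[OF ev n ni sm] second(3)[OF ev' n' ni' sm] unfolding r_def r'_def c_def c'_def
    by (intro mult_mono) auto
  finally have a: "(c * c')^2 \<le> 1/16" using e1 by simp
  have "(3/4) * (3/4) \<le> c^2 * c'^2"
    using second(2)[OF ev n ni sm] second(2)[OF ev' n' ni' sm] unfolding c_def c'_def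
    by (intro mult_mono) auto
  then show False using a by (simp add: power_mult_distrib)
qed

end


lemma xlogx_bound:
  fixes t :: real assumes "t > 0"
  shows "0 \<le> t * ln t - t + 1" "t * ln t - t + 1 \<le> (t - 1)^2"
proof -
  have a: "ln t \<le> t - 1" by (rule ln_le_minus_one[OF assms])
  have b: "ln (inverse t) \<le> inverse t - 1" using assms by (intro ln_le_minus_one) auto
  then have "- ln t \<le> inverse t - 1" by (simp add: ln_inverse)
  then have "t * (- ln t) \<le> t * (inverse t - 1)" using assms by (intro mult_left_mono) auto
  then show "0 \<le> t * ln t - t + 1" using assms by (simp add: algebra_simps)
  have "t * ln t \<le> t * (t - 1)" using a assms by (intro mult_left_mono) auto
  then show "t * ln t - t + 1 \<le> (t - 1)^2" by (simp add: power2_eq_square algebra_simps)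
qed

lemma alg_aux: "C > 0 \<Longrightarrow> l > 0 \<Longrightarrow>
  (x/C) * (a / l) - (y/C) * (b / l) - (1/C) * (b / l + 1 / l) * (x - y) =
  (x * a - y * b - (b + 1) * (x - y)) / (C * l)" for C l x y a b :: real
  by (simp add: field_simps)

lemma vn_ineq:
  assumes M: "real M > 0" and xy: "x * y > 0"
  shows "\<bar>vn_term M x - vn_term M y - (1 / (2 * real M)) * (log 2 (y / (2 * real M)) + 1 / ln 2) * (x - y)\<bar>
         \<le> (x - y)^2 / (2 * real M * ln 2 * \<bar>y\<bar>)"
proof -
  define C where "C = 2 * real M"
  have C: "C > 0" using M by (simp add: C_def)
  have l2: "ln (2::real) > 0" by simp
  have x0: "x \<noteq> 0" and y0: "y \<noteq> 0" using xy by auto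
  define t where "t = x / y"
  have t: "t > 0" using xy by (auto simp: t_def zero_less_divide_iff zero_less_mult_iff)
  have xt: "x = t * y" unfolding t_def using y0 by simp
  have lnx: "ln (x / C) = ln t + ln (y / C)"
    using x0 y0 C t by (simp add: ln_div t_def)
  define \<Phi> where "\<Phi> = x * ln (x / C) - y * ln (y / C) - (ln (y / C) + 1) * (x - y)"
  have Phi: "\<Phi> = y * (t * ln t - t + 1)" unfolding \<Phi>_def lnx by (subst xt)+ (simp add: algebra_simps)
  have eq: "vn_term M x - vn_term M y - (1 / (2 * real M)) * (log 2 (y / (2 * real M)) + 1 / ln 2) * (x - y)
        = \<Phi> / (C * ln 2)"
    unfolding vn_term_def C_def[symmetric] \<Phi>_def using x0 y0 C l2
    by (simp only: if_False log_def alg_aux)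
  have "\<bar>\<Phi>\<bar> = \<bar>y\<bar> * (t * ln t - t + 1)" using Phi xlogx_bound(1)[OF t] by (simp add: abs_mult)
  also have "\<dots> \<le> \<bar>y\<bar> * (t - 1)^2" by (intro mult_left_mono xlogx_bound(2)[OF t]) auto
  also have "\<dots> = (x - y)^2 / \<bar>y\<bar>" unfolding t_def using y0
    by (simp add: field_simps power2_eq_square abs_mult_self_eq)
  finally have "\<bar>\<Phi>\<bar> \<le> (x - y)^2 / \<bar>y\<bar>" .
  then have "\<bar>\<Phi>\<bar> / (C * ln 2) \<le> (x - y)^2 / \<bar>y\<bar> / (C * ln 2)"
    using C l2 by (intro divide_right_mono) auto
  moreover have "\<bar>\<Phi> / (C * ln 2)\<bar> = \<bar>\<Phi>\<bar> / (C * ln 2)" using C l2 by (simp add: abs_divide)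
  moreover have "(x - y)^2 / \<bar>y\<bar> / (C * ln 2) = (x - y)^2 / (C * ln 2 * \<bar>y\<bar>)"
    by (simp add: mult.commute)
  ultimately show ?thesis unfolding eq C_def by (simp add: mult.commute)
qed


context pert begin

lemma eig_L: "eigvals L = range lam"
proof
  show "range lam \<subseteq> eigvals L"
  proof
    fix \<mu> assume "\<mu> \<in> range lam"
    then obtain i where "\<mu> = lam i" by auto
    moreover have "v i \<noteq> 0" using orth[of i i] by auto
    ultimately show "\<mu> \<in> eigvals L" using eig unfolding eigvals_def by blast
  qed
  show "eigvals L \<subseteq> range lam"
  proof
    fix \<mu> assume "\<mu> \<in> eigvals L"
    then obtain x where x: "norm x = 1" "L *v x = \<mu> *\<^sub>R x" using eig_unit by blast
    have "A 0 *v x = \<mu> *\<^sub>R x" using x by (simp add: A_def)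
    then obtain i where "\<bar>\<mu> - lam i\<bar> \<le> \<bar>0\<bar> * K" using near x(1) by blast
    then show "\<mu> \<in> range lam" by auto
  qed
qed

lemma d_zero:
  assumes z: "z \<noteq> 0" "L *v z = 0" "D *v z = 0" and li: "lam i = 0"
  shows "d i = 0"
proof -
  define x where "x = (1 / norm z) *\<^sub>R z"
  have nx: "norm x = 1" using z by (simp add: x_def)
  have Lx: "A 0 *v x = 0 *\<^sub>R x" using z by (simp add: x_def A_def matrix_vector_mult_scaleR)
  have Dx: "D *v x = 0" using z by (simp add: x_def matrix_vector_mult_scaleR)
  obtain j where "\<bar>0 - lam j\<bar> \<le> \<bar>0\<bar> * K" using near[OF Lx nx] by blast
  then have "lam j = lam i" using li by simp
  then have ji: "j = i" using injl by (simp add: inj_eq)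
  have "(gap^2 / 4) * (1 - (x \<bullet> v i)^2) \<le> 0^2 * K^2"
    by (rule conc[OF Lx nx]) (use li gap_pos in auto)
  then have "1 - (x \<bullet> v i)^2 \<le> 0" using gap_pos by (simp add: mult_le_0_iff)
  then have "(norm (x - (x \<bullet> v i) *\<^sub>R v i))^2 \<le> 0" using rnorm[OF nx, of i] by simp
  then have xe: "x = (x \<bullet> v i) *\<^sub>R v i" by simp
  have c0: "x \<bullet> v i \<noteq> 0" using xe nx by (metis norm_zero scaleR_zero_left zero_neq_one)
  have "0 = D *v x" using Dx by simp
  also have "\<dots> = (x \<bullet> v i) *\<^sub>R (D *v v i)" by (subst xe) (simp add: matrix_vector_mult_scaleR)
  finally have "D *v v i = 0" using c0 by simp
  then show ?thesis by (simp add: d_def)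
qed

definition fd :: "nat \<Rightarrow> 'n \<Rightarrow> real" where
  "fd M i = (1 / (2 * real M)) * (log 2 (lam i / (2 * real M)) + 1 / ln 2)"

lemma pointwise:
  assumes z: "z \<noteq> 0" "L *v z = 0" "D *v z = 0"
    and M: "real M > 0"
    and small: "\<bar>e\<bar> * K < min gap rho / 4"
    and cardS: "card (eigvals (A e)) = CARD('n)"
  shows "\<bar>vn_entropy M (A e) - vn_entropy M L - e * (- (\<Sum>i\<in>UNIV. fd M i * d i))\<bar>
      \<le> real CARD('n) * ((K^2 / (2 * real M * ln 2 * rho) + (\<Sum>i\<in>UNIV. \<bar>fd M i\<bar>) * (3 * K^2 / gap)) * e^2)"
proof -
  define S where "S = eigvals (A e)"
  have g0: "gap > 0" "rho > 0" "K > 0" using gap_pos rho_pos K_pos by auto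
  have sm4: "\<bar>e\<bar> * K \<le> gap / 4" "\<bar>e\<bar> * K < rho / 4" using small by auto
  have finS: "finite S" using cardS unfolding S_def by (metis card.infinite finite_UNIV card_gt_0_iff zero_less_card_finite)
  have uidx: "i = j" if "\<bar>\<mu> - lam i\<bar> \<le> \<bar>e\<bar> * K" "\<bar>\<mu> - lam j\<bar> \<le> \<bar>e\<bar> * K" for \<mu> i j
  proof (rule ccontr)
    assume "i \<noteq> j"
    then have "gap \<le> \<bar>lam i - lam j\<bar>" by (rule gap_le)
    then show False using that sm4 g0 by linarith
  qed
  define g where "g \<mu> = (THE i. \<bar>\<mu> - lam i\<bar> \<le> \<bar>e\<bar> * K)" for \<mu>
  have gp: "\<bar>\<mu> - lam (g \<mu>)\<bar> \<le> \<bar>e\<bar> * K" if mS0: "\<mu> \<in> S" for \<mu>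
  proof -
    obtain x where x: "norm x = 1" "A e *v x = \<mu> *\<^sub>R x" using eig_unit mS0 unfolding S_def by blast
    obtain i where i: "\<bar>\<mu> - lam i\<bar> \<le> \<bar>e\<bar> * K" using near[OF x(2) x(1)] by blast
    show ?thesis unfolding g_def by (rule theI[of _ i]) (use i uidx in blast)+
  qed
  have ginj: "inj_on g S"
  proof
    fix \<mu> \<mu>' assume a: "\<mu> \<in> S" "\<mu>' \<in> S" "g \<mu> = g \<mu>'"
    obtain x where x: "norm x = 1" "A e *v x = \<mu> *\<^sub>R x" using eig_unit a unfolding S_def by blast
    obtain x' where x': "norm x' = 1" "A e *v x' = \<mu>' *\<^sub>R x'" using eig_unit a unfolding S_def by blast
    show "\<mu> = \<mu>'" by (rule uniq[OF x(2) x(1) x'(2) x'(1) gp[OF a(1)]]) (use gp[OF a(2)] a(3) sm4 in auto)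
  qed
  have "g ` S = UNIV"
    by (rule card_seteq) (use ginj cardS card_image[OF ginj] in \<open>auto simp: S_def\<close>)
  then have bij: "bij_betw g S UNIV" using ginj by (simp add: bij_betw_def)
  have zS: "0 \<in> S" unfolding S_def eigvals_def A_def using z
    by (auto simp: matrix_vector_mult_add_rdistrib scaleR_mv intro!: exI[of _ z])
  define f where "f = vn_term M"
  define T where "T \<mu> = f \<mu> - f (lam (g \<mu>)) - e * (fd M (g \<mu>) * d (g \<mu>))" for \<mu>
  define W where "W = K^2 / (2 * real M * ln 2 * rho) + (\<Sum>i\<in>UNIV. \<bar>fd M i\<bar>) * (3 * K^2 / gap)"
  have hL: "vn_entropy M L = - (\<Sum>i\<in>UNIV. f (lam i))"
    unfolding vn_entropy_def eig_L f_def using injl by (simp add: sum.reindex)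
  have r1: "(\<Sum>i\<in>UNIV. f (lam i)) = (\<Sum>\<mu>\<in>S. f (lam (g \<mu>)))"
    using sum.reindex_bij_betw[OF bij, of "\<lambda>i. f (lam i)"] by simp
  have r2: "(\<Sum>i\<in>UNIV. fd M i * d i) = (\<Sum>\<mu>\<in>S. fd M (g \<mu>) * d (g \<mu>))"
    using sum.reindex_bij_betw[OF bij, of "\<lambda>i. fd M i * d i"] by simp
  have eqT: "vn_entropy M (A e) - vn_entropy M L - e * (- (\<Sum>i\<in>UNIV. fd M i * d i)) = - (\<Sum>\<mu>\<in>S. T \<mu>)"
    unfolding hL r1 r2 T_def unfolding vn_entropy_def S_def[symmetric] f_def
    by (simp add: sum_subtractf sum_distrib_left)
  have Tb: "\<bar>T \<mu>\<bar> \<le> W * e^2" if mS: "\<mu> \<in> S" for \<mu>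
  proof (cases "lam (g \<mu>) = 0")
    case True
    have "\<bar>0 - lam (g \<mu>)\<bar> \<le> \<bar>e\<bar> * K" using True g0 by simp
    then have "g \<mu> = g 0" using uidx gp[OF zS] by blast
    then have m0: "\<mu> = 0" using ginj mS zS by (meson inj_onD)
    have "d (g \<mu>) = 0" by (rule d_zero[OF z True])
    then have "T \<mu> = 0" unfolding T_def using m0 True by simp
    moreover have "W \<ge> 0" unfolding W_def using g0 M
      by (intro add_nonneg_nonneg mult_nonneg_nonneg divide_nonneg_nonneg sum_nonneg) auto
    ultimately show ?thesis by simp
  next
    case False
    define l where "l = lam (g \<mu>)"
    have l0: "l \<noteq> 0" using False l_def by simp
    have rl: "rho \<le> \<bar>l\<bar>" unfolding l_def by (rule rho_le[OF False])
    have ml: "\<bar>\<mu> - l\<bar> \<le> \<bar>e\<bar> * K" unfolding l_def by (rule gp[OF mS])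
    have ml': "\<bar>\<mu> - l\<bar> < \<bar>l\<bar>" using ml sm4 rl g0 by linarith
    have pos: "\<mu> * l > 0"
    proof (cases "l > 0")
      case True then have "\<mu> > 0" using ml' by linarith
      then show ?thesis using True by simp
    next
      case False then have "l < 0" using l0 by simp
      moreover then have "\<mu> < 0" using ml' by linarith
      ultimately show ?thesis by (simp add: mult_neg_neg)
    qed
    have a1: "\<bar>f \<mu> - f l - fd M (g \<mu>) * (\<mu> - l)\<bar> \<le> (\<mu> - l)^2 / (2 * real M * ln 2 * \<bar>l\<bar>)"
      using vn_ineq[OF M pos] unfolding f_def fd_def l_def by simp
    have "(\<mu> - l)^2 \<le> (\<bar>e\<bar> * K)^2"
      using ml by (metis abs_ge_zero abs_le_square_iff abs_of_nonneg order_trans power2_abs)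
    then have "(\<mu> - l)^2 / (2 * real M * ln 2 * \<bar>l\<bar>) \<le> (\<bar>e\<bar> * K)^2 / (2 * real M * ln 2 * rho)"
      using M rl g0 by (intro frac_le) auto
    also have "\<dots> = K^2 / (2 * real M * ln 2 * rho) * e^2" by (simp add: power_mult_distrib)
    finally have b1: "\<bar>f \<mu> - f l - fd M (g \<mu>) * (\<mu> - l)\<bar> \<le> K^2 / (2 * real M * ln 2 * rho) * e^2"
      using a1 by linarith
    obtain x where x: "norm x = 1" "A e *v x = \<mu> *\<^sub>R x" using eig_unit mS unfolding S_def by blast
    have "(\<mu> - l - e * d (g \<mu>))^2 \<le> 8 * e^4 * K^4 / gap^2"
      unfolding l_def by (rule second(1)[OF x(2) x(1) gp[OF mS] sm4(1)])
    also have "\<dots> \<le> (3 * e^2 * K^2 / gap)^2" using g0 by (simp add: power_divide power_mult_distrib field_simps)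
    finally have "\<bar>\<mu> - l - e * d (g \<mu>)\<bar> \<le> 3 * e^2 * K^2 / gap"
      using g0 by (metis abs_le_square_iff abs_of_nonneg divide_nonneg_nonneg mult_nonneg_nonneg
          zero_le_numeral zero_le_power2 less_imp_le)
    then have "\<bar>fd M (g \<mu>) * (\<mu> - l - e * d (g \<mu>))\<bar> \<le> \<bar>fd M (g \<mu>)\<bar> * (3 * e^2 * K^2 / gap)"
      unfolding abs_mult by (rule mult_left_mono) auto
    also have "\<dots> \<le> (\<Sum>i\<in>UNIV. \<bar>fd M i\<bar>) * (3 * e^2 * K^2 / gap)"
      using g0 by (intro mult_right_mono member_le_sum) auto
    finally have b2: "\<bar>fd M (g \<mu>) * (\<mu> - l - e * d (g \<mu>))\<bar> \<le> (\<Sum>i\<in>UNIV. \<bar>fd M i\<bar>) * (3 * K^2 / gap) * e^2"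
      by (simp add: mult.commute mult.left_commute)
    have "T \<mu> = (f \<mu> - f l - fd M (g \<mu>) * (\<mu> - l)) + fd M (g \<mu>) * (\<mu> - l - e * d (g \<mu>))"
      unfolding T_def l_def by (simp add: algebra_simps)
    then have "\<bar>T \<mu>\<bar> \<le> K^2 / (2 * real M * ln 2 * rho) * e^2 + (\<Sum>i\<in>UNIV. \<bar>fd M i\<bar>) * (3 * K^2 / gap) * e^2"
      using b1 b2 by linarith
    then show ?thesis unfolding W_def by (simp add: algebra_simps)
  qed
  have "\<bar>- (\<Sum>\<mu>\<in>S. T \<mu>)\<bar> \<le> (\<Sum>\<mu>\<in>S. \<bar>T \<mu>\<bar>)" by (simp add: sum_abs)
  also have "\<dots> \<le> (\<Sum>\<mu>\<in>S. W * e^2)" by (intro sum_mono Tb)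
  also have "\<dots> = real CARD('n) * (W * e^2)" using cardS by (simp add: S_def)
  finally show ?thesis unfolding eqT W_def .
qed

end


context pert begin
lemma final:
  assumes z: "z \<noteq> 0" "L *v z = 0" "D *v z = 0"
    and card_ev: "\<forall>\<^sub>F e in nhds 0. card (eigvals (A e)) = CARD('n)"
  shows "(\<lambda>e. vn_entropy M (A e) - vn_entropy M L - e * (- (\<Sum>i\<in>UNIV. fd M i * d i))) \<in> O[at 0](\<lambda>e. e^2)"
proof (cases "M = 0")
  case True
  have "vn_term M x = 0" for x using True by (simp add: vn_term_def)
  moreover have "fd M i = 0" for i using True by (simp add: fd_def)
  ultimately show ?thesis by (simp add: vn_entropy_def)
next
  case False
  then have M: "real M > 0" by simp
  define W where "W = K^2 / (2 * real M * ln 2 * rho) + (\<Sum>i\<in>UNIV. \<bar>fd M i\<bar>) * (3 * K^2 / gap)"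
  define e0 where "e0 = min gap rho / 4 / K"
  have e0: "e0 > 0" using gap_pos rho_pos K_pos by (simp add: e0_def)
  have ev1: "\<forall>\<^sub>F e in nhds 0. \<bar>e\<bar> < e0"
    unfolding eventually_nhds_metric using e0 by (auto simp: dist_real_def intro!: exI[of _ e0])
  have "\<forall>\<^sub>F e in nhds (0::real). \<bar>vn_entropy M (A e) - vn_entropy M L - e * (- (\<Sum>i\<in>UNIV. fd M i * d i))\<bar>
      \<le> (real CARD('n) * W) * \<bar>e^2\<bar>"
    using ev1 card_ev
  proof eventually_elim
    case (elim e)
    have "\<bar>e\<bar> * K < min gap rho / 4" using elim(1) K_pos unfolding e0_def by (simp add: field_simps)
    from pointwise[OF z M this elim(2)] show ?case unfolding W_def by (simp add: mult.assoc)
  qed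
  then have "\<forall>\<^sub>F e in at (0::real). norm (vn_entropy M (A e) - vn_entropy M L - e * (- (\<Sum>i\<in>UNIV. fd M i * d i)))
      \<le> (real CARD('n) * W) * norm (e^2)"
    unfolding eventually_at_filter by (auto elim: eventually_mono)
  then show ?thesis by (rule bigoI)
qed
end

lemma sum_mv: "(sum f S) *v x = (\<Sum>a\<in>S. f a *v x)" for f :: "'a \<Rightarrow> real^'n::finite^'n"
  by (induction S rule: infinite_finite_induct) (auto simp: matrix_vector_mult_add_rdistrib)

lemma deltaL_mv:
  assumes "p \<noteq> q"
  shows "deltaL p q *v x = (\<chi> i. if i = p then x$p - x$q else if i = q then x$q - x$p else 0)"
proof -
  have "(deltaL p q *v x) $ i = (if i = p then x$p - x$q else if i = q then x$q - x$p else 0)" for i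
  proof -
    have "(deltaL p q *v x) $ i = (\<Sum>j\<in>UNIV. deltaL p q $ i $ j * x $ j)"
      by (simp add: matrix_vector_mult_def)
    also have "\<dots> = (\<Sum>j\<in>UNIV. (if i = p then (if j = p then x$p else 0) - (if j = q then x$q else 0)
        else if i = q then (if j = q then x$q else 0) - (if j = p then x$p else 0) else 0))"
      by (rule sum.cong) (use assms in \<open>auto simp: deltaL_def\<close>)
    also have "\<dots> = (if i = p then x$p - x$q else if i = q then x$q - x$p else 0)"
      by (simp add: sum_subtractf)
    finally show ?thesis .
  qed
  then show ?thesis by (simp add: vec_eq_iff)
qed

lemma deltaL_quad:
  assumes "p \<noteq> q"
  shows "(deltaL p q *v x) \<bullet> x = (x$p - x$q)^2"
proof -
  have "(deltaL p q *v x) \<bullet> x = (\<Sum>i\<in>UNIV. (if i = p then (x$p - x$q) * x$p else 0) + (if i = q then (x$q - x$p) * x$q else 0))"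
    unfolding deltaL_mv[OF assms] inner_vec_def by (rule sum.cong) (use assms in auto)
  also have "\<dots> = (x$p - x$q)^2" by (simp add: sum.distrib power2_eq_square algebra_simps)
  finally show ?thesis .
qed

lemma deltaL_one: "p \<noteq> q \<Longrightarrow> deltaL p q *v (\<chi> i. 1) = 0"
  by (simp add: deltaL_mv vec_eq_iff)

lemma deltaL_entry: "deltaL p q $ i $ j = (if (i = p \<and> j = p) \<or> (i = q \<and> j = q) then 1
                        else if (i = p \<and> j = q) \<or> (i = q \<and> j = p) then -1 else (0::real))"
  unfolding deltaL_def by (simp only: vec_lambda_beta)

lemma if_eq_cong2: "(A \<longleftrightarrow> A') \<Longrightarrow> (B \<longleftrightarrow> B') \<Longrightarrow>
   (if A then x else if B then y else z) = (if A' then x else if B' then y else z)"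
  by simp

lemma deltaL_symm: "symm (deltaL p q)"
  unfolding symm_def deltaL_entry by (intro allI if_eq_cong2) blast+

lemma lap_symm: assumes g: "simple_graph E" shows "symm (laplacian E)"
proof -
  have s: "E i j = E j i" for i j using g unfolding simple_graph_def by blast
  show ?thesis unfolding symm_def laplacian_def by (simp add: s)
qed

lemma lap_one: "laplacian E *v (\<chi> i. 1) = 0"
proof -
  have "(laplacian E *v (\<chi> i. 1)) $ i = 0" for i
  proof -
    have "(laplacian E *v (\<chi> i. 1)) $ i = (\<Sum>j\<in>UNIV. (if i = j then real (degree E i) else 0) - (if E i j then 1 else 0))"
      by (simp add: matrix_vector_mult_def laplacian_def)
    also have "\<dots> = real (degree E i) - real (card {j. E i j})"
      by (simp add: sum_subtractf sum.If_cases)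
    also have "\<dots> = 0" by (simp add: degree_def)
    finally show ?thesis .
  qed
  then show ?thesis by (simp add: vec_eq_iff)
qed


theorem corollary3p14:
  fixes E :: "'n::finite \<Rightarrow> 'n \<Rightarrow> bool"
    and Ep Em :: "('n \<times> 'n) set"
    and lam :: "'n \<Rightarrow> real"
    and v :: "'n \<Rightarrow> real^'n"
  assumes graph: "simple_graph E"
    and eig: "\<And>i. laplacian E *v v i = lam i *\<^sub>R v i"
    and orthonormal: "\<And>i j. v i \<bullet> v j = (if i = j then 1 else 0)"
    and simple: "inj lam"
    and Ep_new: "\<And>p q. (p, q) \<in> Ep \<Longrightarrow> p \<noteq> q \<and> \<not> E p q \<and> (q, p) \<notin> Ep"
    and Em_old: "\<And>p q. (p, q) \<in> Em \<Longrightarrow> E p q \<and> (q, p) \<notin> Em"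
    and simple_eps: "\<forall>\<^sub>F \<epsilon> in nhds 0.
        card (eigvals (laplacian E + \<epsilon> *\<^sub>R
           ((\<Sum>(p,q)\<in>Ep. deltaL p q) - (\<Sum>(p,q)\<in>Em. deltaL p q)))) = CARD('n)"
  shows "(\<lambda>\<epsilon>::real.
            vn_entropy (num_edges E) (laplacian E + \<epsilon> *\<^sub>R
                ((\<Sum>(p,q)\<in>Ep. deltaL p q) - (\<Sum>(p,q)\<in>Em. deltaL p q)))
          - vn_entropy (num_edges E) (laplacian E)
          - \<epsilon> * (- (1 / (2 * real (num_edges E))) *
               (\<Sum>i\<in>UNIV. ((\<Sum>(p,q)\<in>Ep. (v i $ p - v i $ q)^2)
                           - (\<Sum>(p,q)\<in>Em. (v i $ p - v i $ q)^2))
                         * (log 2 (lam i / (2 * real (num_edges E))) + 1 / ln 2))))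
         \<in> O[at 0](\<lambda>\<epsilon>. \<epsilon>^2)"
proof -
  define D where "D = (\<Sum>(p,q)\<in>Ep. deltaL p q) - (\<Sum>(p,q)\<in>Em. deltaL p q)"
  define M where "M = num_edges E"
  have nEp: "p \<noteq> q" if "(p, q) \<in> Ep" for p q using Ep_new that by blast
  have nEm: "p \<noteq> q" if "(p, q) \<in> Em" for p q
    using Em_old[OF that] graph unfolding simple_graph_def by blast
  have sD: "symm D" unfolding D_def
    by (intro symm_diff symm_sum) (auto simp: deltaL_symm split: prod.splits)
  interpret P: pert "laplacian E" D lam v
    by unfold_locales (auto simp: lap_symm[OF graph] sD eig orthonormal simple)
  define z :: "real^'n" where "z = (\<chi> i. 1)"
  have z0: "z \<noteq> 0" by (simp add: z_def vec_eq_iff)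
  have Lz: "laplacian E *v z = 0" unfolding z_def by (rule lap_one)
  have Dz: "D *v z = 0"
  proof -
    have a: "(\<Sum>(p,q)\<in>Ep. deltaL p q) *v z = 0"
      unfolding sum_mv by (rule sum.neutral) (auto simp: z_def deltaL_one nEp)
    have b: "(\<Sum>(p,q)\<in>Em. deltaL p q) *v z = 0"
      unfolding sum_mv by (rule sum.neutral) (auto simp: z_def deltaL_one nEm)
    show ?thesis unfolding D_def by (simp add: matrix_vector_mult_diff_rdistrib a b)
  qed
  have dq: "(deltaL p q *v x) \<bullet> x = (x $ p - x $ q)^2" if "p \<noteq> q" for p q x
    by (rule deltaL_quad[OF that])
  have dd: "P.d i = (\<Sum>(p,q)\<in>Ep. (v i $ p - v i $ q)^2) - (\<Sum>(p,q)\<in>Em. (v i $ p - v i $ q)^2)" for i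
  proof -
    have "P.d i = ((\<Sum>(p,q)\<in>Ep. deltaL p q) *v v i) \<bullet> v i - ((\<Sum>(p,q)\<in>Em. deltaL p q) *v v i) \<bullet> v i"
      unfolding P.d_def by (simp add: D_def matrix_vector_mult_diff_rdistrib inner_diff_left)
    also have "((\<Sum>(p,q)\<in>Ep. deltaL p q) *v v i) \<bullet> v i = (\<Sum>(p,q)\<in>Ep. (v i $ p - v i $ q)^2)"
      unfolding sum_mv inner_sum_left by (rule sum.cong) (auto simp: dq nEp)
    also have "((\<Sum>(p,q)\<in>Em. deltaL p q) *v v i) \<bullet> v i = (\<Sum>(p,q)\<in>Em. (v i $ p - v i $ q)^2)"
      unfolding sum_mv inner_sum_left by (rule sum.cong) (auto simp: dq nEm)
    finally show ?thesis .
  qed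
  have AD: "P.A e = laplacian E + e *\<^sub>R D" for e by (rule P.A_def)
  have ce: "\<forall>\<^sub>F e in nhds 0. card (eigvals (P.A e)) = CARD('n)"
    unfolding AD unfolding D_def by (rule simple_eps)
  have fin: "(\<lambda>e. vn_entropy M (P.A e) - vn_entropy M (laplacian E) - e * (- (\<Sum>i\<in>UNIV. P.fd M i * P.d i)))
      \<in> O[at 0](\<lambda>e. e^2)"
    by (rule P.final[OF z0 Lz Dz ce])
  have eq: "- (1 / (2 * real M)) *
               (\<Sum>i\<in>UNIV. ((\<Sum>(p,q)\<in>Ep. (v i $ p - v i $ q)^2)
                           - (\<Sum>(p,q)\<in>Em. (v i $ p - v i $ q)^2))
                         * (log 2 (lam i / (2 * real M)) + 1 / ln 2))
        = - (\<Sum>i\<in>UNIV. P.fd M i * P.d i)"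
    unfolding dd P.fd_def by (simp add: sum_distrib_left mult_ac sum_negf)
  show ?thesis using fin unfolding eq[unfolded M_def] AD unfolding D_def M_def .
qed


end
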